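(* Let ${\mathbf B}_1$ and ${\mathbf B}_2$ be two real symmetric $3\times3$ matrices. If ${\mathbf B}_1+t{\mathbf B}_2$ has a multiple eigenvalue for every real number $t$, then ${\mathbf B}_1$ and ${\mathbf B}_2$ can be diagonalized by the same orthogonal matrix. *)

theory Defs
  imports "HOL-Analysis.Analysis" "HOL-Computational_Algebra.Polynomial"
begin

definition charpoly :: "real^'n^'n \<Rightarrow> real poly" where
  "charpoly A = det (\<chi> i j. (if i = j then [:0, 1:] else 0) - [:A $ i $ j:])"

definition has_multiple_eigenvalue :: "real^'n^'n \<Rightarrow> bool" where
  "has_multiple_eigenvalue A \<longleftrightarrow> (\<exists>c::real. [:- c, 1:] ^ 2 dvd charpoly A)"

definition diagonal_matrix :: "real^'n^'n \<Rightarrow> bool" where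
  "diagonal_matrix A \<longleftrightarrow> (\<forall>i j. i \<noteq> j \<longrightarrow> A $ i $ j = 0)"

definition symmetric_matrix :: "real^'n^'n \<Rightarrow> bool" where
  "symmetric_matrix A \<longleftrightarrow> transpose A = A"

end

theory Submission
  imports Defs
begin


definition e2 :: "real^3^3 \<Rightarrow> real" where
 "e2 X = X$1$1*X$2$2 - X$1$2*X$2$1 + X$1$1*X$3$3 - X$1$3*X$3$1 + X$2$2*X$3$3 - X$2$3*X$3$2"
definition tr3 :: "real^3^3 \<Rightarrow> real" where "tr3 X = X$1$1 + X$2$2 + X$3$3"

lemma charpoly_3: "charpoly (X::real^3^3) = [: - det X, e2 X, - tr3 X, 1 :]"
proof -
  have "poly (charpoly X) x = poly [: - det X, e2 X, - tr3 X, 1 :] x" for x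
    unfolding charpoly_def det_3 e2_def tr3_def
    by (simp add: algebra_simps)
  then show ?thesis by (metis poly_eq_poly_eq_iff ext)
qed

lemma mult_eig: assumes "has_multiple_eigenvalue (X::real^3^3)"
  shows "\<exists>c. c^3 - tr3 X * c^2 + e2 X * c - det X = 0 \<and> 3*c^2 - 2*tr3 X * c + e2 X = 0"
proof -
  obtain c q where q: "charpoly X = [:-c,1:]^2 * q" using assms unfolding has_multiple_eigenvalue_def by (auto elim: dvdE)
  have "poly (charpoly X) c = 0" using q by simp
  moreover have "poly (pderiv (charpoly X)) c = 0" unfolding q
    by (simp add: pderiv_mult pderiv_power)
  ultimately show ?thesis unfolding charpoly_3 by (intro exI[of _ c]) (auto simp: pderiv_pCons algebra_simps power2_eq_square power3_eq_cube)
qed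

lemma sym_entries: assumes "transpose (X::real^3^3) = X"
  shows "X$2$1 = X$1$2" "X$3$1 = X$1$3" "X$3$2 = X$2$3"
proof -
  have "transpose X $ i $ j = X $ i $ j" for i j using assms by simp
  hence "X $ j $ i = X $ i $ j" for i j unfolding transpose_def by simp
  thus "X$2$1 = X$1$2" "X$3$1 = X$1$3" "X$3$2 = X$2$3" by auto
qed

lemma minors_real: fixes a b f d e g :: real
  assumes E2: "a*b - d^2 + a*f - e^2 + b*f - g^2 = 0" and D: "a*b*f + 2*d*e*g - a*g^2 - b*e^2 - f*d^2 = 0"
  shows "a*b = d^2 \<and> a*f = e^2 \<and> b*f = g^2 \<and> a*g = d*e \<and> d*g = b*e \<and> d*f = e*g"
proof -
  have id: "(a*b-d^2)^2 + (a*f-e^2)^2 + (b*f-g^2)^2 + 2*(a*g-d*e)^2 + 2*(d*g-b*e)^2 + 2*(d*f-e*g)^2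
     = (a*b - d^2 + a*f - e^2 + b*f - g^2)^2 - 2*(a+b+f)*(a*b*f + 2*d*e*g - a*g^2 - b*e^2 - f*d^2)"
    by (simp add: power2_eq_square algebra_simps)
  have sq0: "(a*b-d^2)^2 + (a*f-e^2)^2 + (b*f-g^2)^2 + 2*(a*g-d*e)^2 + 2*(d*g-b*e)^2 + 2*(d*f-e*g)^2 = 0"
    using id E2 D by simp
  have "(a*b-d^2)^2 = 0 \<and> (a*f-e^2)^2 = 0 \<and> (b*f-g^2)^2 = 0 \<and> (a*g-d*e)^2 = 0 \<and> (d*g-b*e)^2 = 0 \<and> (d*f-e*g)^2 = 0"
    using sq0 by (smt (verit) zero_le_power2)
  thus ?thesis by simp
qed
lemma sq_rel: assumes sym: "transpose (X::real^3^3) = X" and "has_multiple_eigenvalue X"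
  shows "\<exists>\<alpha> \<beta>. X ** X = \<alpha> *\<^sub>R X + \<beta> *\<^sub>R mat 1"
proof -
  obtain c where c1: "c^3 - tr3 X * c^2 + e2 X * c - det X = 0" and c2: "3*c^2 - 2*tr3 X * c + e2 X = 0"
    using mult_eig[OF assms(2)] by blast
  note s = sym_entries[OF sym]
  obtain a b f d e g where Xe: "X$1$1 = a + c" "X$2$2 = b + c" "X$3$3 = f + c" "X$1$2 = d" "X$1$3 = e" "X$2$3 = g"
     "X$2$1 = d" "X$3$1 = e" "X$3$2 = g"
    using s that[of "X$1$1 - c" "X$2$2 - c" "X$3$3 - c" "X$1$2" "X$1$3" "X$2$3"] by simp
  have E2: "a*b - d^2 + a*f - e^2 + b*f - g^2 = 0" using c2
    unfolding e2_def tr3_def Xe by (simp add: algebra_simps power2_eq_square)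
  have D: "a*b*f + 2*d*e*g - a*g^2 - b*e^2 - f*d^2 = 0" using c1
    unfolding e2_def tr3_def det_3 Xe by (simp add: algebra_simps power2_eq_square power3_eq_cube)
  have m: "a*b = d^2" "a*f = e^2" "b*f = g^2" "a*g = d*e" "d*g = b*e" "d*f = e*g"
    using minors_real[OF E2 D] by auto
  show ?thesis
  proof (intro exI)
    show "X ** X = (a+b+f + 2*c) *\<^sub>R X + (c^2 - (a+b+f + 2*c)*c) *\<^sub>R mat 1"
      unfolding vec_eq_iff forall_3 matrix_matrix_mult_def sum_3 mat_def
      apply (simp only: vec_lambda_beta Xe vector_add_component vector_scaleR_component if_True if_False)
      apply (simp)
      using m by (simp_all add: algebra_simps power2_eq_square)
  qed
qed

definition outer :: "real^3 \<Rightarrow> real^3 \<Rightarrow> real^3^3" where "outer u w = (\<chi> i j. u$i * w$j)"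

lemma mm_add_right: "(A::real^'n^'m) ** (B + C) = A ** B + A ** C"
  by (rule matrix_add_ldistrib)
lemma mm_add_left: "((A::real^'n^'m) + B) ** C = A ** C + B ** C"
  by (vector matrix_matrix_mult_def sum.distrib[symmetric] field_simps)
lemma mm_diff_right: "(A::real^'n^'m) ** (B - C) = A ** B - A ** C"
  by (vector matrix_matrix_mult_def sum_subtractf[symmetric] field_simps)
lemma mm_diff_left: "((A::real^'n^'m) - B) ** C = A ** C - B ** C"
  by (vector matrix_matrix_mult_def sum_subtractf[symmetric] field_simps)
lemma mm_scale_left: "(k *\<^sub>R (A::real^'n^'m)) ** B = k *\<^sub>R (A ** B)"
  by (simp add: scalar_matrix_assoc)
lemma mm_scale_right: "(A::real^'n^'m) ** (k *\<^sub>R B) = k *\<^sub>R (A ** B)"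
  by (simp add: matrix_scalar_ac scalar_matrix_assoc)
lemmas mm_simps = mm_add_right mm_add_left mm_diff_right mm_diff_left mm_scale_left mm_scale_right

lemma outer_zero [simp]: "outer 0 0 = 0" by (simp add: outer_def vec_eq_iff)

lemma rank1_form: assumes sym: "transpose (X::real^3^3) = X" and "has_multiple_eigenvalue X"
  shows "\<exists>c l m. X = c *\<^sub>R mat 1 + l *\<^sub>R outer m m"
proof -
  obtain c where c1: "c^3 - tr3 X * c^2 + e2 X * c - det X = 0" and c2: "3*c^2 - 2*tr3 X * c + e2 X = 0"
    using mult_eig[OF assms(2)] by blast
  note s = sym_entries[OF sym]
  obtain a b f d e g where Xe: "X$1$1 = a + c" "X$2$2 = b + c" "X$3$3 = f + c" "X$1$2 = d" "X$1$3 = e" "X$2$3 = g"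
     "X$2$1 = d" "X$3$1 = e" "X$3$2 = g"
    using s that[of "X$1$1 - c" "X$2$2 - c" "X$3$3 - c" "X$1$2" "X$1$3" "X$2$3"] by simp
  have E2: "a*b - d^2 + a*f - e^2 + b*f - g^2 = 0" using c2
    unfolding e2_def tr3_def Xe by (simp add: algebra_simps power2_eq_square)
  have D: "a*b*f + 2*d*e*g - a*g^2 - b*e^2 - f*d^2 = 0" using c1
    unfolding e2_def tr3_def det_3 Xe by (simp add: algebra_simps power2_eq_square power3_eq_cube)
  have m: "a*b = d^2" "a*f = e^2" "b*f = g^2" "a*g = d*e" "d*g = b*e" "d*f = e*g"
    using minors_real[OF E2 D] by auto
  have key: "X = c *\<^sub>R mat 1 + l *\<^sub>R outer mm mm" if
     h: "\<forall>i j. X$i$j = (if i = j then c else 0) + l * mm$i * mm$j" for l mm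
    using h by (simp add: vec_eq_iff outer_def mat_def)
  consider "a \<noteq> 0" | "a = 0" "b \<noteq> 0" | "a = 0" "b = 0" "f \<noteq> 0" | "a = 0" "b = 0" "f = 0" by blast
  then show ?thesis
  proof cases
    case 1
    have "X = c *\<^sub>R mat 1 + (1/a) *\<^sub>R outer (vector [a,d,e]) (vector [a,d,e])"
      apply (rule key) unfolding forall_3 using 1 m Xe
      by (simp add: field_simps power2_eq_square)
    then show ?thesis by blast
  next
    case 2
    have "X = c *\<^sub>R mat 1 + (1/b) *\<^sub>R outer (vector [d,b,g]) (vector [d,b,g])"
      apply (rule key) unfolding forall_3 using 2 m Xe
      by (simp add: field_simps power2_eq_square)
    then show ?thesis by blast
  next
    case 3
    have "X = c *\<^sub>R mat 1 + (1/f) *\<^sub>R outer (vector [e,g,f]) (vector [e,g,f])"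
      apply (rule key) unfolding forall_3 using 3 m Xe
      by (simp add: field_simps power2_eq_square)
    then show ?thesis by blast
  next
    case 4
    have "X = c *\<^sub>R mat 1 + 0 *\<^sub>R outer 0 0"
      apply (rule key) unfolding forall_3 using 4 m Xe
      by (simp add: field_simps power2_eq_square)
    then show ?thesis by blast
  qed
qed

lemma outer_conj: "transpose Q ** outer u u ** Q = outer (transpose Q *v u) (transpose Q *v u)"
  by (simp add: vec_eq_iff forall_3 matrix_matrix_mult_def matrix_vector_mult_def transpose_def outer_def sum_3 algebra_simps)

lemma outer_scale: "outer (r *\<^sub>R u) (r *\<^sub>R u) = (r^2) *\<^sub>R outer u u"
  by (simp add: vec_eq_iff outer_def power2_eq_square)

lemma diag_form: assumes "transpose (X::real^3^3) = X" and "has_multiple_eigenvalue X"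
  shows "\<exists>Q. orthogonal_matrix Q \<and> (\<forall>p q. diagonal_matrix (transpose Q ** (p *\<^sub>R mat 1 + q *\<^sub>R X) ** Q))"
proof -
  obtain c l m where X: "X = c *\<^sub>R mat 1 + l *\<^sub>R outer m m" using rank1_form[OF assms] by blast
  have "\<exists>mu v. X = c *\<^sub>R mat 1 + mu *\<^sub>R outer v v \<and> norm v = 1"
  proof (cases "m = 0")
    case True
    then show ?thesis using X by (intro exI[of _ 0] exI[of _ "axis 1 1"]) auto
  next
    case False
    hence "norm m \<noteq> 0" by simp
    hence "m = norm m *\<^sub>R (m /\<^sub>R norm m)" by simp
    hence "outer m m = (norm m)^2 *\<^sub>R outer (m /\<^sub>R norm m) (m /\<^sub>R norm m)"
      by (metis outer_scale)
    then show ?thesis using X False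
      by (intro exI[of _ "l * (norm m)^2"] exI[of _ "m /\<^sub>R norm m"]) (simp add: norm_sgn)
  qed
  then obtain mu v where Xv: "X = c *\<^sub>R mat 1 + mu *\<^sub>R outer v v" and nv: "norm v = 1" by blast
  obtain Q where Q: "orthogonal_matrix Q" "Q *v axis 1 1 = v"
    using orthogonal_matrix_exists_basis[OF nv] by blast
  have QQ: "transpose Q ** Q = mat 1" using Q(1) orthogonal_matrix by blast
  have Qv: "transpose Q *v v = axis 1 1"
    using Q(2) QQ by (metis matrix_vector_mul_assoc matrix_vector_mul_lid)
  have "transpose Q ** (p *\<^sub>R mat 1 + q *\<^sub>R X) ** Q
        = (p + q*c) *\<^sub>R mat 1 + (q*mu) *\<^sub>R outer (axis 1 1) (axis 1 1)" for p q
  proof -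
    have "transpose Q ** (p *\<^sub>R mat 1 + q *\<^sub>R X) ** Q
      = (p + q*c) *\<^sub>R (transpose Q ** Q) + (q*mu) *\<^sub>R (transpose Q ** outer v v ** Q)"
      unfolding Xv
      by (simp add: mm_simps scaleR_add_right scaleR_add_left algebra_simps)
    then show ?thesis using QQ outer_conj Qv by simp
  qed
  moreover have "diagonal_matrix ((r *\<^sub>R mat 1 + s *\<^sub>R outer (axis 1 1) (axis 1 1)) :: real^3^3)" for r s
    unfolding diagonal_matrix_def by (simp add: outer_def mat_def axis_def)
  ultimately show ?thesis using Q(1) by auto
qed
lemma sq_zero: assumes "transpose (U::real^3^3) = U" "U ** U = 0" shows "U = 0"
proof -
  note s = sym_entries[OF assms(1)]
  have "(U**U)$1$1 = 0" "(U**U)$2$2 = 0" "(U**U)$3$3 = 0" using assms(2) by simp_all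
  hence "U$1$1^2 + U$1$2^2 + U$1$3^2 = 0" "U$2$1^2 + U$2$2^2 + U$2$3^2 = 0" "U$3$1^2 + U$3$2^2 + U$3$3^2 = 0"
    unfolding matrix_matrix_mult_def sum_3 using s by (simp_all add: power2_eq_square)
  moreover have L: "x = 0 \<and> y = 0 \<and> z = 0" if "x^2+y^2+z^2 = 0" for x y z :: real
  proof -
    have "x^2 = 0 \<and> y^2 = 0 \<and> z^2 = 0" using that zero_le_power2[of x] zero_le_power2[of y] zero_le_power2[of z] by linarith
    thus ?thesis by simp
  qed
  ultimately have "U$1$1 = 0" "U$1$2 = 0" "U$1$3 = 0" "U$2$1 = 0" "U$2$2 = 0" "U$2$3 = 0" "U$3$1 = 0" "U$3$2 = 0" "U$3$3 = 0"
    by (metis s)+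
  thus ?thesis by (simp add: vec_eq_iff forall_3)
qed

lemma det_neg3: "det (- (A::real^3^3)) = - det A"
  by (simp add: det_3 algebra_simps)

lemma det_scal3: "det (u *\<^sub>R mat 1 :: real^3^3) = u^3"
  by (simp add: det_3 mat_def power3_eq_cube)

lemma transpose_lin: "transpose (A - t *\<^sub>R B) = transpose A - t *\<^sub>R transpose B"
  by (simp add: transpose_def vec_eq_iff)

lemma UW: fixes U W :: "real^3^3"
  assumes sU: "transpose U = U" and sW: "transpose W = W"
    and U2: "U ** U = u *\<^sub>R mat 1" and W2: "W ** W = w *\<^sub>R mat 1"
    and UWa: "U ** W + W ** U = d *\<^sub>R mat 1"
  shows "U = 0 \<or> (\<exists>k. W = k *\<^sub>R U)"
proof (cases "u = 0")
  case True
  then show ?thesis using sq_zero[OF sU] U2 by simp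
next
  case False
  define k where "k = d / (2*u)"
  define V where "V = W - k *\<^sub>R U"
  have sV: "transpose V = V" unfolding V_def transpose_lin sU sW ..
  have anti: "U ** V = - (V ** U)"
  proof -
    have "U ** V + V ** U = (U ** W + W ** U) - k *\<^sub>R (U ** U) - k *\<^sub>R (U ** U)"
      unfolding V_def by (simp add: mm_simps algebra_simps)
    also have "\<dots> = (d - k*u - k*u) *\<^sub>R mat 1" unfolding UWa U2
      by (simp only: scaleR_scaleR scaleR_left_diff_distrib)
    also have "\<dots> = 0" unfolding k_def using False by simp
    finally show ?thesis by (simp add: eq_neg_iff_add_eq_0)
  qed
  have V2: "V ** V = (w - k*d + k^2*u) *\<^sub>R mat 1"
  proof -
    have "V ** V = W ** W - k *\<^sub>R (U ** W + W ** U) + (k^2) *\<^sub>R (U ** U)"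
      unfolding V_def by (simp add: mm_simps algebra_simps power2_eq_square scaleR_scaleR)
    then show ?thesis unfolding W2 UWa U2 by (simp only: scaleR_scaleR scaleR_left_diff_distrib scaleR_left_distrib)
  qed
  have "det U * det V = - (det V * det U)"
    using anti by (metis det_mul det_neg3)
  hence dd: "det U * det V = 0" by simp
  have "(det U)^2 = u^3" using U2 det_mul[of U U] det_scal3 by (simp add: power2_eq_square)
  hence "det U \<noteq> 0" using False by auto
  hence "det V = 0" using dd by simp
  hence "(w - k*d + k^2*u)^3 = 0" using V2 det_mul[of V V] det_scal3 by simp
  hence "V ** V = 0" using V2 by simp
  hence "V = 0" using sq_zero[OF sV] by simp
  hence "W = k *\<^sub>R U" unfolding V_def by simp
  then show ?thesis by blast
qed


lemma transpose_lin2: "transpose (A + t *\<^sub>R B) = transpose A + t *\<^sub>R transpose B"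
  by (simp add: transpose_def vec_eq_iff)

lemma sq_expand: "(B1 + t *\<^sub>R B2) ** (B1 + t *\<^sub>R B2) =
   B1 ** B1 + t *\<^sub>R (B1 ** B2 + B2 ** B1) + (t*t) *\<^sub>R (B2 ** B2)" for B1 B2 :: "real^3^3"
  by (simp add: mm_simps algebra_simps scaleR_scaleR)

lemma comp: "(A::real^3^3) = B \<Longrightarrow> A $ i $ j = B $ i $ j" by simp

lemma s2c: fixes x1 j x2 p q ww a0 a1 am b0 b1 bm :: real
  assumes e0: "x1 = a0*p + b0*ww" and e1: "x1 + j + x2 = a1*(p+q) + b1*ww" and em: "x1 - j + x2 = am*(p - q) + bm*ww"
    and am: "am = 2*a0 - a1"
  shows "x2 = ((a1-am)/2)*q + ((b1+bm)/2 - b0)*ww" "j = ((a1-am)/2)*p + a0*q + ((b1-bm)/2)*ww"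
proof -
  have "2*x2 = (a1-am)*q + (b1+bm - 2*b0)*ww" using e0 e1 em unfolding am by (simp add: algebra_simps; linarith) 
  thus "x2 = ((a1-am)/2)*q + ((b1+bm)/2 - b0)*ww" by (simp add: field_simps)
  have "2*j = (a1-am)*p + 2*a0*q + (b1-bm)*ww" using e0 e1 em unfolding am by (simp add: algebra_simps; linarith)
  thus "j = ((a1-am)/2)*p + a0*q + ((b1-bm)/2)*ww" by (simp add: field_simps)
qed

lemma main_indep:
  fixes B1 B2 :: "real^3^3"
  assumes s1: "transpose B1 = B1" and s2: "transpose B2 = B2"
    and me: "\<And>t. has_multiple_eigenvalue (B1 + t *\<^sub>R B2)"
    and n1: "\<not> (\<exists>p. B1 = p *\<^sub>R mat 1)" and n2: "\<not> (\<exists>p q. B2 = p *\<^sub>R mat 1 + q *\<^sub>R B1)"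
  shows False
proof -
  have st: "transpose (B1 + t *\<^sub>R B2) = B1 + t *\<^sub>R B2" for t
    unfolding transpose_lin2 s1 s2 ..
  have "\<exists>a b. B1 ** B1 + t *\<^sub>R (B1 ** B2 + B2 ** B1) + (t*t) *\<^sub>R (B2 ** B2) = a *\<^sub>R (B1 + t *\<^sub>R B2) + b *\<^sub>R mat 1" for t
    using sq_rel[OF st me] unfolding sq_expand .
  then obtain a b where E: "\<And>t. B1 ** B1 + t *\<^sub>R (B1 ** B2 + B2 ** B1) + (t*t) *\<^sub>R (B2 ** B2) = a t *\<^sub>R (B1 + t *\<^sub>R B2) + b t *\<^sub>R mat 1"
    by metis
  have e: "(B1**B1)$i$j + t * ((B1**B2)$i$j + (B2**B1)$i$j) + (t*t) * (B2**B2)$i$j = a t * (B1$i$j + t * B2$i$j) + b t * (mat 1 :: real^3^3)$i$j" for t i j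
    using comp[OF E[of t], of i j] by simp
  have indep: "x = 0 \<and> y = 0 \<and> z = 0" if h: "x *\<^sub>R mat 1 + y *\<^sub>R B1 + z *\<^sub>R B2 = 0" for x y z
  proof -
    have hc: "x * (mat 1 :: real^3^3)$i$j + y * B1$i$j + z * B2$i$j = 0" for i j
      using comp[OF h, of i j] by simp
    show ?thesis
    proof (cases "z = 0")
      case False
      have "B2 = (-x/z) *\<^sub>R mat 1 + (-y/z) *\<^sub>R B1"
        unfolding vec_eq_iff using hc False by (simp add: field_simps) (metis add.commute add_eq_0_iff2 mult.commute)
      then show ?thesis using n2 by blast
    next
      case z: True
      show ?thesis
      proof (cases "y = 0")
        case False
        have "B1 = (-x/y) *\<^sub>R mat 1"
          unfolding vec_eq_iff using hc False z by (simp add: field_simps) (metis add_eq_0_iff2 mult.commute)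
        then show ?thesis using n1 by blast
      next
        case True
        then show ?thesis using hc[of 1 1] z by (simp add: mat_def)
      qed
    qed
  qed
  have lin: "(b 2 - 3*b 1 - b (-1) + 3*b 0) *\<^sub>R mat 1 + (a 2 - 3*a 1 - a (-1) + 3*a 0) *\<^sub>R B1
      + (2*a 2 - 3*a 1 + a (-1)) *\<^sub>R B2 = 0"
    unfolding vec_eq_iff
  proof (intro allI)
    fix i j
    show "((b 2 - 3*b 1 - b (-1) + 3*b 0) *\<^sub>R mat 1 + (a 2 - 3*a 1 - a (-1) + 3*a 0) *\<^sub>R B1
      + (2*a 2 - 3*a 1 + a (-1)) *\<^sub>R B2) $ i $ j = (0::real^3^3) $ i $ j"
      using e[where t=0 and i=i and j=j] e[where t=1 and i=i and j=j] e[where t="-1" and i=i and j=j] e[where t=2 and i=i and j=j] by (simp add: algebra_simps)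
  qed
  from indep[OF lin] have am: "a (-1) = 2 * a 0 - a 1" by linarith
  define z where "z = a 0"
  define c where "c = (a 1 - a (-1)) / 2"
  have e0': "(B1**B1)$i$j = a 0 * B1$i$j + b 0 * (mat 1::real^3^3)$i$j" for i j
    using e[where t=0 and i=i and j=j] by simp
  have e1': "(B1**B1)$i$j + ((B1**B2)$i$j + (B2**B1)$i$j) + (B2**B2)$i$j = a 1 * (B1$i$j + B2$i$j) + b 1 * (mat 1::real^3^3)$i$j" for i j
    using e[where t=1 and i=i and j=j] by simp
  have em': "(B1**B1)$i$j - ((B1**B2)$i$j + (B2**B1)$i$j) + (B2**B2)$i$j = a (-1) * (B1$i$j - B2$i$j) + b (-1) * (mat 1::real^3^3)$i$j" for i j
    using e[where t="-1" and i=i and j=j] by (simp add: algebra_simps)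
  have S2c: "(B2**B2)$i$j = c * B2$i$j + ((b 1 + b (-1))/2 - b 0) * (mat 1::real^3^3)$i$j" for i j
    using s2c(1)[OF e0' e1' em' am] unfolding c_def by simp
  have Jc: "(B1**B2)$i$j + (B2**B1)$i$j = c * B1$i$j + z * B2$i$j + ((b 1 - b (-1))/2) * (mat 1::real^3^3)$i$j" for i j
    using s2c(2)[OF e0' e1' em' am] unfolding c_def z_def by simp
  define U where "U = B1 - (z/2) *\<^sub>R mat 1"
  define W where "W = B2 - (c/2) *\<^sub>R mat 1"
  have sU: "transpose U = U" unfolding U_def transpose_lin s1 by (simp add: transpose_mat)
  have sW: "transpose W = W" unfolding W_def transpose_lin s2 by (simp add: transpose_mat)
  have U2: "U ** U = (b 0 + z^2/4) *\<^sub>R mat 1"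
  proof -
    have "U ** U = B1 ** B1 - (z/2) *\<^sub>R B1 - (z/2) *\<^sub>R B1 + ((z/2)*(z/2)) *\<^sub>R mat 1"
      unfolding U_def by (simp add: mm_simps algebra_simps scaleR_scaleR)
    also have "\<dots> = (b 0 + z^2/4) *\<^sub>R mat 1"
      unfolding vec_eq_iff
    proof (intro allI)
      fix i j
      show "(B1 ** B1 - (z/2) *\<^sub>R B1 - (z/2) *\<^sub>R B1 + ((z/2)*(z/2)) *\<^sub>R mat 1) $ i $ j = ((b 0 + z^2/4) *\<^sub>R (mat 1::real^3^3)) $ i $ j"
        using e[where t=0 and i=i and j=j] unfolding z_def by (simp add: algebra_simps power2_eq_square; linarith)
    qed
    finally show ?thesis .
  qed
  have W2: "W ** W = ((b 1 + b (-1))/2 - b 0 + c^2/4) *\<^sub>R mat 1"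
  proof -
    have "W ** W = B2 ** B2 - (c/2) *\<^sub>R B2 - (c/2) *\<^sub>R B2 + ((c/2)*(c/2)) *\<^sub>R mat 1"
      unfolding W_def by (simp add: mm_simps algebra_simps scaleR_scaleR)
    also have "\<dots> = ((b 1 + b (-1))/2 - b 0 + c^2/4) *\<^sub>R mat 1"
      unfolding vec_eq_iff
    proof (intro allI)
      fix i j
      show "(B2 ** B2 - (c/2) *\<^sub>R B2 - (c/2) *\<^sub>R B2 + ((c/2)*(c/2)) *\<^sub>R mat 1) $ i $ j = (((b 1 + b (-1))/2 - b 0 + c^2/4) *\<^sub>R (mat 1::real^3^3)) $ i $ j"
        using S2c[of i j] by (simp add: algebra_simps power2_eq_square)
    qed
    finally show ?thesis .
  qed
  have UW2: "U ** W + W ** U = ((b 1 - b (-1))/2 + z*c/2) *\<^sub>R mat 1"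
    unfolding vec_eq_iff
  proof (intro allI)
    fix i j
    show "(U ** W + W ** U) $ i $ j = (((b 1 - b (-1))/2 + z*c/2) *\<^sub>R (mat 1::real^3^3)) $ i $ j"
      unfolding U_def W_def using Jc[of i j] by (simp add: mm_simps algebra_simps)
  qed
  from UW[OF sU sW U2 W2 UW2] show False
  proof
    assume "U = 0"
    hence "B1 = (z/2) *\<^sub>R mat 1" unfolding U_def by simp
    thus False using n1 by blast
  next
    assume "\<exists>k. W = k *\<^sub>R U"
    then obtain k where "W = k *\<^sub>R U" by blast
    hence "B2 = (c/2 - k*z/2) *\<^sub>R mat 1 + k *\<^sub>R B1"
      unfolding U_def W_def by (simp add: algebra_simps scaleR_scaleR)
    thus False using n2 by blast
  qed
qed

theorem lemma4p1:
  fixes B1 B2 :: "real^3^3"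
  assumes "symmetric_matrix B1" and "symmetric_matrix B2"
    and "\<forall>t::real. has_multiple_eigenvalue (B1 + t *\<^sub>R B2)"
  shows "\<exists>Q::real^3^3. orthogonal_matrix Q \<and>
           diagonal_matrix (transpose Q ** B1 ** Q) \<and>
           diagonal_matrix (transpose Q ** B2 ** Q)"
proof -
  have s1: "transpose B1 = B1" and s2: "transpose B2 = B2" using assms(1,2) unfolding symmetric_matrix_def by auto
  have me: "\<And>t. has_multiple_eigenvalue (B1 + t *\<^sub>R B2)" using assms(3) by blast
  have st: "transpose (B1 + t *\<^sub>R B2) = B1 + t *\<^sub>R B2" for t
    unfolding transpose_lin2 s1 s2 ..
  consider (c1) p where "B1 = p *\<^sub>R mat 1" | (c2) p q where "B2 = p *\<^sub>R mat 1 + q *\<^sub>R B1"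
    | (c3) "\<not> (\<exists>p. B1 = p *\<^sub>R mat 1)" "\<not> (\<exists>p q. B2 = p *\<^sub>R mat 1 + q *\<^sub>R B1)" by blast
  then show ?thesis
  proof cases
    case c1
    obtain Q where Q: "orthogonal_matrix Q" and D: "\<And>p q. diagonal_matrix (transpose Q ** (p *\<^sub>R mat 1 + q *\<^sub>R (B1 + 1 *\<^sub>R B2)) ** Q)"
      using diag_form[OF st me] by blast
    have "B1 = p *\<^sub>R mat 1 + 0 *\<^sub>R (B1 + 1 *\<^sub>R B2)" "B2 = (-p) *\<^sub>R mat 1 + 1 *\<^sub>R (B1 + 1 *\<^sub>R B2)"
      using c1 by (simp_all add: algebra_simps)
    then show ?thesis using Q D by metis
  next
    case c2
    obtain Q where Q: "orthogonal_matrix Q" and D: "\<And>p q. diagonal_matrix (transpose Q ** (p *\<^sub>R mat 1 + q *\<^sub>R (B1 + 0 *\<^sub>R B2)) ** Q)"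
      using diag_form[OF st me] by blast
    have "B1 = 0 *\<^sub>R mat 1 + 1 *\<^sub>R (B1 + 0 *\<^sub>R B2)" "B2 = p *\<^sub>R mat 1 + q *\<^sub>R (B1 + 0 *\<^sub>R B2)"
      using c2 by simp_all
    then show ?thesis using Q D by metis
  next
    case c3
    then show ?thesis using main_indep[OF s1 s2 me] by blast
  qed
qed

end
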